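(* There is a universal constant $C\ge 2$ such that the following holds. Let $L,M,n\ge1$. For every unsatisfiable CNF $F$ over $n$ variables and every $s_F\ge C\cdot(nLM+|F|)$ such that every resolution refutation of $F$ has more than $s_F$ clauses, there is a decision tree reduction of block-depth $O(n)$ from $\mathrm{rwPHP}(\mathsf{PLS})$ instances with parameters $L,M$ to $\textsc{Refuter}(s(F\vdash_{\mathsf{Res}}\bot)\le s_F)$.
   Context: $[n]=\{0,\dots,n-1\}$; $|F|$ is the number of clauses of $F$. $\textsc{Iter}$ on $[L]$: input $S:[L]\to[L]$; a solution is $x$ with $x=0\wedge S(0)=0$, or $S(x)<x$, or $S(x)>x\wedge S(S(x))=S(x)$. $\mathrm{rwPHP}(\mathsf{PLS})$ with parameters $L,M$: input consists of $f:[M]\to[2M]$; for each $y\in[2M]$ an $\textsc{Iter}$ instance $S_y:[L]\to[L]$; and for each $y$ a function $g_y:[L]\to[M]$. A solution is a pair $(y,a)$ with $a$ a solution of the $\textsc{Iter}$ instance $S_y$ and $f(g_y(a))\ne y$. Resolution refutation format: axioms $C_{-m},\dots,C_{-1}$ are the clauses of $F$; a purported refutation is a sequence of nodes $C_0,\dots,C_{L'-1}$, each with a set of literals, a tag ``resolution'' (with indices $-m\le j,k<i$ and a variable $x_a$) or ``weakening'' (with an index $-m\le j<i$). Node $i$ is valid if for resolution $C_j=x_a\vee D$, $C_k=\overline{x}_a\vee E$, $C_i=D\vee E$; for weakening $C_i=C_j\vee D$; and $C_{L'-1}=\bot$. $\textsc{Refuter}(s(F\vdash_{\mathsf{Res}}\bot)\le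 s_F)$: input is a purported refutation of $F$ with at most $s_F$ nodes; a solution is an index of an invalid node. Each node is a block; block-depth counts distinct blocks queried, and a decision tree reduction computes each node of the output and maps solutions back via decision trees on the input. *)

theory Defs
  imports Main
begin

datatype ('i, 'v, 'o) dtree = Leaf 'o | Query 'i "'v \<Rightarrow> ('i, 'v, 'o) dtree"

primrec dt_eval :: "('i, 'v, 'o) dtree \<Rightarrow> ('i \<Rightarrow> 'v) \<Rightarrow> 'o" where
  "dt_eval (Leaf out) x = out"
| "dt_eval (Query i t) x = dt_eval (t (x i)) x"

primrec dt_blocks :: "('i, 'v, 'o) dtree \<Rightarrow> ('i \<Rightarrow> 'v) \<Rightarrow> 'i set" where
  "dt_blocks (Leaf out) x = {}"
| "dt_blocks (Query i t) x = insert i (dt_blocks (t (x i)) x)"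

definition dt_reduction ::
  "('i \<Rightarrow> 'v) set \<Rightarrow> (('i \<Rightarrow> 'v) \<Rightarrow> 's \<Rightarrow> bool) \<Rightarrow>
   ('j \<Rightarrow> 'w) set \<Rightarrow> (('j \<Rightarrow> 'w) \<Rightarrow> 't \<Rightarrow> bool) \<Rightarrow>
   ('j \<Rightarrow> ('i, 'v, 'w) dtree) \<Rightarrow> ('t \<Rightarrow> ('i, 'v, 's) dtree) \<Rightarrow> nat \<Rightarrow> bool" where
  "dt_reduction domP solP domQ solQ Tout Tsol d \<longleftrightarrow>
     (\<forall>x \<in> domP.
        (\<lambda>j. dt_eval (Tout j) x) \<in> domQ \<and>
        (\<forall>out. solQ (\<lambda>j. dt_eval (Tout j) x) out \<longrightarrow> solP x (dt_eval (Tsol out) x)) \<and>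
        (\<forall>j. card (dt_blocks (Tout j) x) \<le> d) \<and>
        (\<forall>out. card (dt_blocks (Tsol out) x) \<le> d))"

definition iter_sol :: "nat \<Rightarrow> (nat \<Rightarrow> nat) \<Rightarrow> nat \<Rightarrow> bool" where
  "iter_sol L S a \<longleftrightarrow> a < L \<and>
     ((a = 0 \<and> S 0 = 0) \<or> S a < a \<or> (S a > a \<and> S (S a) = S a))"

text \<open>Blocks of an rwPHP(PLS) instance: f(i), S_y(a), g_y(a).\<close>
datatype rw_block = FB nat | SB nat nat | GB nat nat

definition rw_dom :: "nat \<Rightarrow> nat \<Rightarrow> (rw_block \<Rightarrow> nat) set" where
  "rw_dom L M = {x.
     (\<forall>i. if i < M then x (FB i) < 2 * M else x (FB i) = 0) \<and>
     (\<forall>y a. if y < 2 * M \<and> a < L then x (SB y a) < L else x (SB y a) = 0) \<and>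
     (\<forall>y a. if y < 2 * M \<and> a < L then x (GB y a) < M else x (GB y a) = 0)}"

definition rw_sol :: "nat \<Rightarrow> nat \<Rightarrow> (rw_block \<Rightarrow> nat) \<Rightarrow> nat \<times> nat \<Rightarrow> bool" where
  "rw_sol L M x ya \<longleftrightarrow> (case ya of (y, a) \<Rightarrow>
     y < 2 * M \<and> iter_sol L (\<lambda>z. x (SB y z)) a \<and> x (FB (x (GB y a))) \<noteq> y)"

type_synonym lit = "nat \<times> bool"   \<comment> \<open>(a, True) is x_a, (a, False) is its negation\<close>
type_synonym clause = "lit set"
type_synonym cnf = "clause list"

definition cnf_over :: "nat \<Rightarrow> cnf \<Rightarrow> bool" where
  "cnf_over n F \<longleftrightarrow> (\<forall>C \<in> set F. \<forall>l \<in> C. fst l < n)"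

definition unsat :: "cnf \<Rightarrow> bool" where
  "unsat F \<longleftrightarrow> (\<forall>\<alpha> :: nat \<Rightarrow> bool. \<exists>C \<in> set F. \<forall>l \<in> C. \<alpha> (fst l) \<noteq> snd l)"

datatype rule = Res int int nat | Weak int

type_synonym node = "clause \<times> rule"

text \<open>C_j: for -m \<le> j < 0 the axiom F ! (m + j), i.e. C_{-m},...,C_{-1} are the clauses of F;
  for j \<ge> 0 the clause of node j.\<close>
definition clause_at :: "cnf \<Rightarrow> (nat \<Rightarrow> node) \<Rightarrow> int \<Rightarrow> clause" where
  "clause_at F P j = (if j < 0 then F ! nat (int (length F) + j) else fst (P (nat j)))"

definition node_valid :: "cnf \<Rightarrow> (nat \<Rightarrow> node) \<Rightarrow> nat \<Rightarrow> nat \<Rightarrow> bool" where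
  "node_valid F P Lp i \<longleftrightarrow>
     (case snd (P i) of
        Res j k a \<Rightarrow> - int (length F) \<le> j \<and> j < int i \<and> - int (length F) \<le> k \<and> k < int i \<and>
          (\<exists>D E. clause_at F P j = insert (a, True) D \<and>
                 clause_at F P k = insert (a, False) E \<and> fst (P i) = D \<union> E)
      | Weak j \<Rightarrow> - int (length F) \<le> j \<and> j < int i \<and>
          (\<exists>D. fst (P i) = clause_at F P j \<union> D)) \<and>
     (i = Lp - 1 \<longrightarrow> fst (P i) = {})"

definition is_refutation :: "cnf \<Rightarrow> (nat \<Rightarrow> node) \<Rightarrow> nat \<Rightarrow> bool" where
  "is_refutation F P Lp \<longleftrightarrow> Lp \<ge> 1 \<and> (\<forall>i < Lp. node_valid F P Lp i)"

definition ref_dom :: "nat \<Rightarrow> nat \<Rightarrow> (nat \<Rightarrow> node) set" where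
  "ref_dom n s = {P. \<forall>i < s. \<forall>l \<in> fst (P i). fst l < n}"

definition ref_sol :: "cnf \<Rightarrow> nat \<Rightarrow> (nat \<Rightarrow> node) \<Rightarrow> nat \<Rightarrow> bool" where
  "ref_sol F s P i \<longleftrightarrow> i < s \<and> \<not> node_valid F P s i"

end

theory Submission
  imports Defs
begin

primrec dt_bind :: "('i,'v,'a) dtree \<Rightarrow> ('a \<Rightarrow> ('i,'v,'b) dtree) \<Rightarrow> ('i,'v,'b) dtree" where
  "dt_bind (Leaf r) h = h r"
| "dt_bind (Query i t) h = Query i (\<lambda>v. dt_bind (t v) h)"

lemma eval_bind[simp]: "dt_eval (dt_bind t h) x = dt_eval (h (dt_eval t x)) x"
  by (induction t) auto

lemma blocks_bind[simp]: "dt_blocks (dt_bind t h) x = dt_blocks t x \<union> dt_blocks (h (dt_eval t x)) x"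
  by (induction t) auto

lemma finite_blocks[simp]: "finite (dt_blocks t x)"
  by (induction t) auto

definition qry :: "'i \<Rightarrow> ('i,'v,'v) dtree" where "qry i = Query i Leaf"

lemma qry_eval[simp]: "dt_eval (qry i) x = x i" and qry_blocks[simp]: "dt_blocks (qry i) x = {i}"
  by (auto simp: qry_def)

fun rho :: "(rw_block \<Rightarrow> nat) \<Rightarrow> nat \<Rightarrow> nat \<Rightarrow> bool list" where
  "rho x 0 y = []"
| "rho x (Suc k) y = rho x k (x (FB (y div 2))) @ [odd y]"

fun rhoT :: "nat \<Rightarrow> nat \<Rightarrow> (rw_block, nat, bool list) dtree" where
  "rhoT 0 y = Leaf []"
| "rhoT (Suc k) y = dt_bind (qry (FB (y div 2))) (\<lambda>v. dt_bind (rhoT k v) (\<lambda>r. Leaf (r @ [odd y])))"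

lemma rhoT_eval[simp]: "dt_eval (rhoT k y) x = rho x k y"
  by (induction k arbitrary: y) auto

lemma rhoT_card: "card (dt_blocks (rhoT k y) x) \<le> k"
proof (induction k arbitrary: y)
  case 0 then show ?case by simp
next
  case (Suc k)
  have "card (dt_blocks (rhoT (Suc k) y) x) \<le> Suc (card (dt_blocks (rhoT k (x (FB (y div 2)))) x))"
    by (simp add: card_insert_if)
  then show ?case using Suc[of "x (FB (y div 2))"] by linarith
qed

lemma length_rho[simp]: "length (rho x k y) = k"
  by (induction k arbitrary: y) auto

definition negc :: "bool list \<Rightarrow> clause" where
  "negc r = {(j, \<not> r ! j) | j. j < length r}"

lemma negc_Nil[simp]: "negc [] = {}" by (simp add: negc_def)

lemma negc_snoc: "negc (r @ [b]) = insert (length r, \<not> b) (negc r)"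
proof (rule set_eqI)
  fix p :: "nat \<times> bool"
  show "p \<in> negc (r @ [b]) \<longleftrightarrow> p \<in> insert (length r, \<not> b) (negc r)"
  proof
    assume "p \<in> negc (r @ [b])"
    then obtain j where j: "j < Suc (length r)" "p = (j, \<not> (r@[b]) ! j)" by (auto simp: negc_def)
    show "p \<in> insert (length r, \<not> b) (negc r)"
    proof (cases "j < length r")
      case True then show ?thesis using j by (auto simp: negc_def nth_append)
    next
      case False then have "j = length r" using j by simp
      then show ?thesis using j by simp
    qed
  next
    assume "p \<in> insert (length r, \<not> b) (negc r)"
    then show "p \<in> negc (r @ [b])"
    proof
      assume "p = (length r, \<not> b)" then show ?thesis unfolding negc_def by force
    next
      assume "p \<in> negc r"
      then obtain j where "j < length r" "p = (j, \<not> r ! j)" by (auto simp: negc_def)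
      then show ?thesis unfolding negc_def by (force simp: nth_append)
    qed
  qed
qed

lemma negc_vars: "l \<in> negc r \<Longrightarrow> fst l < length r"
  by (auto simp: negc_def)

datatype kind = KLeaf nat | KBlock nat nat | KReg nat nat nat | KPad | KFin

locale Cn = fixes n L M :: nat and F :: cnf and sF :: nat
begin

definition W where "W = M + 2*M*L"
definition base where "base k = 2*M + (n-1-k)*W"
definition posB where "posB k i = base k + i"
definition posR where "posR k y a = base k + M + y*L + (L-1-a)"
definition posT where "posT k z = (if k = n then z else posR k z 0)"
definition Bsz where "Bsz = 2*M + n*W"

definition dec where "dec j = (if j < 2*M then KLeaf j else if j < Bsz then
   (let r = j - 2*M; t = r div W; q = r mod W in
    if q < M then KBlock (n-1-t) q else KReg (n-1-t) ((q-M) div L) (L-1-(q-M) mod L))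
   else if j = sF - 1 then KFin else KPad)"

definition axn :: node where "axn = (last F, Weak (-1))"
definition axidx :: "bool list \<Rightarrow> nat" where
  "axidx r = (SOME c. c < length F \<and> (\<forall>l\<in>F!c. r ! fst l \<noteq> snd l))"
definition leafnode :: "bool list \<Rightarrow> node" where
  "leafnode r = (negc r, Weak (int (axidx r) - int (length F)))"
definition blocknode :: "nat \<Rightarrow> nat \<Rightarrow> bool list \<Rightarrow> node" where
  "blocknode k i r = (negc r, Res (int (posT (k+1) (2*i))) (int (posT (k+1) (2*i+1))) k)"
definition regnode :: "nat \<Rightarrow> nat \<Rightarrow> nat \<Rightarrow> nat \<Rightarrow> nat \<Rightarrow> nat \<Rightarrow> bool list \<Rightarrow> node" where
  "regnode k y a s ss g r = (if (a=0 \<and> s=0) \<or> s<a \<or> (a<s \<and> ss=s) then (negc r, Weak (int (posB k g)))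
     else if a=0 \<or> s\<noteq>a then (negc r, Weak (int (posR k y s))) else axn)"
definition finnode :: node where "finnode = ({}, Weak (int (posR 0 0 0)))"

definition Tout :: "nat \<Rightarrow> (rw_block, nat, node) dtree" where
  "Tout j = (case dec j of
     KLeaf z \<Rightarrow> dt_bind (rhoT n z) (\<lambda>r. Leaf (leafnode r))
   | KBlock k i \<Rightarrow> dt_bind (qry (FB i)) (\<lambda>v. dt_bind (rhoT k v) (\<lambda>r. Leaf (blocknode k i r)))
   | KReg k y a \<Rightarrow> dt_bind (qry (SB y a)) (\<lambda>s. dt_bind (qry (SB y s)) (\<lambda>ss.
        dt_bind (qry (GB y a)) (\<lambda>g. dt_bind (rhoT k y) (\<lambda>r. Leaf (regnode k y a s ss g r)))))
   | KPad \<Rightarrow> Leaf axn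
   | KFin \<Rightarrow> Leaf finnode)"

definition Tsol :: "nat \<Rightarrow> (rw_block, nat, nat \<times> nat) dtree" where
  "Tsol j = Leaf (case dec j of KReg k y a \<Rightarrow> (y,a) | _ \<Rightarrow> (0,0))"

lemma Tout_eval: "dt_eval (Tout j) x = (case dec j of
     KLeaf z \<Rightarrow> leafnode (rho x n z)
   | KBlock k i \<Rightarrow> blocknode k i (rho x k (x (FB i)))
   | KReg k y a \<Rightarrow> regnode k y a (x (SB y a)) (x (SB y (x (SB y a)))) (x (GB y a)) (rho x k y)
   | KPad \<Rightarrow> axn | KFin \<Rightarrow> finnode)"
  by (simp add: Tout_def split: kind.split)

lemma divmod_aux: "(b::nat) < d \<Longrightarrow> (t*d + b) div d = t \<and> (t*d + b) mod d = b"
  by simp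

lemma W_bound: "y < 2*M \<Longrightarrow> a < L \<Longrightarrow> M + y*L + (L-1-a) < W"
proof -
  assume "y<2*M" "a<L"
  then have "(y+1)*L \<le> 2*M*L" by (intro mult_le_mono1) simp
  then show ?thesis using \<open>a<L\<close> unfolding W_def by (simp add: algebra_simps)
qed

lemma posR_eq: "posR k y a = 2*M + ((n-1-k)*W + (M + y*L + (L-1-a)))"
  by (simp add: posR_def base_def)

lemma body_lt: "k < n \<Longrightarrow> q < W \<Longrightarrow> 2*M + ((n-1-k)*W + q) < Bsz"
proof -
  assume "k<n" "q<W"
  then have "(n-1-k)*W + q < (n-1-k+1)*W" by simp
  also have "\<dots> \<le> n*W" using \<open>k<n\<close> by (intro mult_le_mono1) simp
  finally show ?thesis unfolding Bsz_def by linarith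
qed

lemma dec_leaf: "z < 2*M \<Longrightarrow> dec z = KLeaf z" by (simp add: dec_def)

lemma dec_reg: assumes "k<n" "y<2*M" "a<L" shows "dec (posR k y a) = KReg k y a"
proof -
  define q where "q = M + y*L + (L-1-a)"
  have q: "q < W" using W_bound assms q_def by blast
  have lt: "posR k y a < Bsz" using body_lt[OF assms(1) q] by (simp add: posR_eq q_def)
  have e: "posR k y a - 2*M = (n-1-k)*W + q" by (simp add: posR_eq q_def)
  have d: "(posR k y a - 2*M) div W = n-1-k" "(posR k y a - 2*M) mod W = q"
    using divmod_aux[OF q, of "n-1-k"] unfolding e by simp_all
  have l: "(y*L + (L-1-a)) div L = y" "(y*L + (L-1-a)) mod L = L-1-a"
    using divmod_aux[of "L-1-a" L y] assms by auto
  have nlt: "\<not> posR k y a < 2*M" by (simp add: posR_eq)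
  have qM: "\<not> q < M" and qs: "q - M = y*L + (L-1-a)" by (simp_all add: q_def)
  have aa: "L - 1 - (L-1-a) = a" using assms by simp
  have kk: "n-1-(n-1-k) = k" using assms by simp
  show ?thesis unfolding dec_def Let_def using lt d l nlt qM qs aa kk by simp
qed

lemma dec_block: assumes "k<n" "i<M" shows "dec (posB k i) = KBlock k i"
proof -
  have q: "i < W" using assms by (simp add: W_def)
  have lt: "posB k i < Bsz" using body_lt[OF assms(1) q] by (simp add: posB_def base_def)
  have d: "(posB k i - 2*M) div W = n-1-k" "(posB k i - 2*M) mod W = i"
    using divmod_aux[OF q, of "n-1-k"] by (simp_all add: posB_def base_def)
  show ?thesis using lt d assms unfolding dec_def by (simp add: Let_def posB_def base_def)
qed

lemma dec_inv_reg: assumes "dec j = KReg k y a" "L \<ge> 1"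
  shows "j = posR k y a \<and> k < n \<and> y < 2*M \<and> a < L"
proof -
  have j: "2*M \<le> j" "j < Bsz" using assms(1) by (auto simp: dec_def split: if_splits)
  define r where "r = j - 2*M"
  define t where "t = r div W"
  define q where "q = r mod W"
  have "0 < n*W" using j unfolding Bsz_def by linarith
  then have Wp: "W > 0" by simp
  have rlt: "r < n*W" using j by (simp add: r_def Bsz_def)
  have tn: "t < n" using rlt Wp by (simp add: t_def less_mult_imp_div_less)
  have qW: "q < W" using Wp by (simp add: q_def)
  have qM: "\<not> q < M" and kk: "k = n-1-t" and yy: "y = (q-M) div L" and aa: "a = L-1-(q-M) mod L"
    using assms(1) j by (auto simp: dec_def Let_def r_def t_def q_def split: if_splits)
  have "q - M < 2*M*L" using qW qM by (simp add: W_def)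
  then have yb: "y < 2*M" using yy assms(2) by (simp add: div_less_iff_less_mult mult.commute)
  have ab: "a < L" using aa assms(2) by simp
  have "(q-M) mod L < L" using assms(2) by simp
  then have "L-1-a = (q-M) mod L" using aa by simp
  then have "y*L + (L-1-a) = q - M" using yy by (metis mult.commute div_mult_mod_eq)
  then have "posR k y a = 2*M + (t*W + q)" using tn kk qM by (simp add: posR_eq)
  also have "\<dots> = j" using j div_mult_mod_eq[of "j-2*M" W] by (simp add: t_def q_def r_def)
  finally have "posR k y a = j" .
  moreover have "k < n" using kk tn by linarith
  ultimately show ?thesis using yb ab by blast
qed

lemma dec_inv_block: assumes "dec j = KBlock k i"
  shows "j = posB k i \<and> k < n \<and> i < M"
proof -
  have j: "2*M \<le> j" "j < Bsz" using assms(1) by (auto simp: dec_def split: if_splits)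
  define r where "r = j - 2*M"
  define t where "t = r div W"
  define q where "q = r mod W"
  have "0 < n*W" using j unfolding Bsz_def by linarith
  then have Wp: "W > 0" by simp
  have rlt: "r < n*W" using j by (simp add: r_def Bsz_def)
  have tn: "t < n" using rlt Wp by (simp add: t_def less_mult_imp_div_less)
  have qM: "q < M" and kk: "k = n-1-t" and ii: "i = q"
    using assms(1) j by (auto simp: dec_def Let_def r_def t_def q_def split: if_splits)
  have "posB k i = 2*M + (t*W + q)" using tn kk ii by (simp add: posB_def base_def)
  also have "\<dots> = j" using j div_mult_mod_eq[of "j-2*M" W] by (simp add: t_def q_def r_def)
  finally have "posB k i = j" .
  moreover have "k < n" using kk tn by linarith
  ultimately show ?thesis using qM ii by blast
qed

lemma dec_inv_leaf: "dec j = KLeaf z \<Longrightarrow> j = z \<and> z < 2*M"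
  by (auto simp: dec_def Let_def split: if_splits)

lemma dec_inv_pad: "dec j = KPad \<Longrightarrow> Bsz \<le> j \<and> j \<noteq> sF - 1 \<and> 2*M \<le> j"
  by (auto simp: dec_def Let_def split: if_splits)

lemma dec_inv_fin: "dec j = KFin \<Longrightarrow> Bsz \<le> j \<and> j = sF - 1 \<and> 2*M \<le> j"
  by (auto simp: dec_def Let_def split: if_splits)

definition PP where "PP x = (\<lambda>j. dt_eval (Tout j) x)"

lemma clause_at_pos[simp]: "clause_at F P (int p) = fst (P p)"
  by (simp add: clause_at_def)

lemma posR_bound: "k<n \<Longrightarrow> y<2*M \<Longrightarrow> a<L \<Longrightarrow> posR k y a < Bsz"
  using body_lt[of k "M + y*L + (L-1-a)"] W_bound by (simp add: posR_eq)

lemma posB_bound: "k<n \<Longrightarrow> i<M \<Longrightarrow> posB k i < Bsz"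
  using body_lt[of k i] by (simp add: posB_def base_def W_def)

lemma posB_lt_R: "g<M \<Longrightarrow> posB k g < posR k y a"
  by (simp add: posB_def posR_def)

lemma posR_mono: "a < s \<Longrightarrow> s < L \<Longrightarrow> posR k y s < posR k y a"
  by (simp add: posR_def)

lemma posT_lt_B: assumes "k<n" "z<2*M" "L \<ge> 1" shows "posT (k+1) z < posB k i"
proof (cases "k+1 = n")
  case True then show ?thesis using assms by (simp add: posT_def posB_def base_def)
next
  case False
  have "M + z*L + (L-1-0) < W" by (rule W_bound) (use assms in auto)
  moreover have "n-1-k = Suc (n-1-(k+1))" using False assms(1) by simp
  ultimately show ?thesis using False by (simp add: posT_def posB_def posR_def base_def)
qed

lemma F_ne: "unsat F \<Longrightarrow> F \<noteq> []"
  by (auto simp: unsat_def)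

lemma axidx_prop: assumes "length r = n" "cnf_over n F" "unsat F"
  shows "axidx r < length F \<and> F ! axidx r \<subseteq> negc r"
proof -
  obtain C where C: "C \<in> set F" "\<forall>l\<in>C. r ! fst l \<noteq> snd l"
    using assms(3) unfolding unsat_def by (metis (mono_tags))
  then obtain c where c: "c < length F" "F ! c = C" by (metis in_set_conv_nth)
  have ex: "\<exists>c. c < length F \<and> (\<forall>l\<in>F!c. r ! fst l \<noteq> snd l)" using C c by blast
  have p: "axidx r < length F \<and> (\<forall>l\<in>F!axidx r. r ! fst l \<noteq> snd l)"
    unfolding axidx_def by (rule someI_ex[OF ex])
  have "F ! axidx r \<subseteq> negc r"
  proof
    fix l assume l: "l \<in> F ! axidx r"
    have "F ! axidx r \<in> set F" using p by simp
    then have "fst l < n" using assms(2) l by (auto simp: cnf_over_def)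
    moreover have "snd l = (\<not> r ! fst l)" using p l by auto
    ultimately show "l \<in> negc r" unfolding negc_def using assms(1) by (cases l) auto
  qed
  then show ?thesis using p by simp
qed

lemma dom_facts: assumes "x \<in> rw_dom L M"
  shows "\<And>i. i < M \<Longrightarrow> x (FB i) < 2*M"
    and "\<And>y a. y < 2*M \<Longrightarrow> a < L \<Longrightarrow> x (SB y a) < L"
    and "\<And>y a. y < 2*M \<Longrightarrow> a < L \<Longrightarrow> x (GB y a) < M"
proof -
  have hh: "(\<forall>i. if i < M then x (FB i) < 2 * M else x (FB i) = 0) \<and>
     (\<forall>y a. if y < 2 * M \<and> a < L then x (SB y a) < L else x (SB y a) = 0) \<and>
     (\<forall>y a. if y < 2 * M \<and> a < L then x (GB y a) < M else x (GB y a) = 0)"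
    using assms unfolding rw_dom_def mem_Collect_eq .
  note h1 = hh[THEN conjunct1] and h2 = hh[THEN conjunct2, THEN conjunct1]
    and h3 = hh[THEN conjunct2, THEN conjunct2]
  show "\<And>i. i < M \<Longrightarrow> x (FB i) < 2*M"
  proof -
    fix i assume "i < M"
    moreover have "if i < M then x (FB i) < 2 * M else x (FB i) = 0" using h1 by (rule spec)
    ultimately show "x (FB i) < 2*M" by (simp only: if_True)
  qed
  show "\<And>y a. y < 2*M \<Longrightarrow> a < L \<Longrightarrow> x (SB y a) < L"
  proof -
    fix y a assume "y < 2*M" "a < L"
    moreover have "if y < 2 * M \<and> a < L then x (SB y a) < L else x (SB y a) = 0" using h2 by blast
    ultimately show "x (SB y a) < L" by (simp only: if_True conj_absorb simp_thms)
  qed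
  show "\<And>y a. y < 2*M \<Longrightarrow> a < L \<Longrightarrow> x (GB y a) < M"
  proof -
    fix y a assume "y < 2*M" "a < L"
    moreover have "if y < 2 * M \<and> a < L then x (GB y a) < M else x (GB y a) = 0" using h3 by blast
    ultimately show "x (GB y a) < M" by (simp only: if_True conj_absorb simp_thms)
  qed
qed

context
  fixes x
  assumes hn: "n \<ge> 1" and hL: "L \<ge> 1" and hM: "M \<ge> 1" and hs: "Bsz + 2 \<le> sF"
    and hF: "cnf_over n F" and hu: "unsat F" and hx: "x \<in> rw_dom L M"
begin

lemma m_pos: "length F \<ge> 1" using F_ne[OF hu] by (cases F) auto

lemma clause_m1: "clause_at F P (-1) = last F"
proof -
  have e: "nat (int (length F) - 1) = length F - 1" using m_pos by linarith
  show ?thesis using F_ne[OF hu] unfolding clause_at_def by (simp add: e last_conv_nth)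
qed

lemma reg_clause: assumes "k<n" "y<2*M" "a<L"
  shows "fst (PP x (posR k y a)) = (if a=0 \<or> x (SB y a) \<noteq> a then negc (rho x k y) else last F)"
  using assms by (auto simp: PP_def Tout_eval dec_reg regnode_def axn_def)

lemma posT_clause: assumes "k<n" "z<2*M"
  shows "fst (PP x (posT (k+1) z)) = negc (rho x (k+1) z)"
proof (cases "k+1 = n")
  case True then show ?thesis using assms by (simp add: posT_def PP_def Tout_eval dec_leaf leafnode_def)
next
  case False
  then have "posT (k+1) z = posR (k+1) z 0" by (simp add: posT_def)
  then show ?thesis using reg_clause[of "k+1" z 0] False assms hL by simp
qed

lemma valid_leaf: assumes "z < 2*M" shows "node_valid F (PP x) sF z"
proof -
  define r where "r = rho x n z"
  define c where "c = axidx r"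
  have P: "PP x z = leafnode r" using assms by (simp add: PP_def Tout_eval dec_leaf r_def)
  have ax: "c < length F" "F ! c \<subseteq> negc r" using axidx_prop[of r] hF hu by (simp_all add: r_def c_def)
  have ca: "clause_at F (PP x) (int c - int (length F)) = F ! c" using ax by (simp add: clause_at_def)
  have ne: "z \<noteq> sF - 1" using assms hs by (simp add: Bsz_def)
  show ?thesis unfolding node_valid_def using P ax ca ne
    by (auto simp: leafnode_def c_def[symmetric] intro!: exI[of _ "negc r"])
qed

lemma valid_block: assumes "k<n" "i<M" shows "node_valid F (PP x) sF (posB k i)"
proof -
  define r where "r = rho x k (x (FB i))"
  have P: "PP x (posB k i) = blocknode k i r" using assms by (simp add: PP_def Tout_eval dec_block r_def)
  have c0: "clause_at F (PP x) (int (posT (k+1) (2*i))) = insert (k, True) (negc r)"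
    using posT_clause[OF assms(1), of "2*i"] assms by (simp add: r_def negc_snoc)
  have c1: "clause_at F (PP x) (int (posT (k+1) (2*i+1))) = insert (k, False) (negc r)"
    using posT_clause[OF assms(1), of "2*i+1"] assms by (simp add: r_def negc_snoc)
  have l0: "posT (k+1) (2*i) < posB k i" "posT (k+1) (2*i+1) < posB k i"
    using posT_lt_B assms hL by auto
  have ne: "posB k i \<noteq> sF - 1" using posB_bound[OF assms] hs by simp
  show ?thesis unfolding node_valid_def using P c0 c1 l0 ne
    by (auto simp: blocknode_def)
qed

lemma valid_reg: assumes "k<n" "y<2*M" "a<L"
  shows "node_valid F (PP x) sF (posR k y a) \<or> rw_sol L M x (y,a)"
proof -
  define r where "r = rho x k y"
  define s where "s = x (SB y a)"
  define ss where "ss = x (SB y s)"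
  define g where "g = x (GB y a)"
  have P: "PP x (posR k y a) = regnode k y a s ss g r"
    unfolding PP_def Tout_eval dec_reg[OF assms] kind.case s_def ss_def g_def r_def ..
  have sL: "s < L" using dom_facts(2)[OF hx] assms by (simp add: s_def)
  have gM: "g < M" using dom_facts(3)[OF hx] assms by (simp add: g_def)
  have ne: "posR k y a \<noteq> sF - 1" using posR_bound[OF assms] hs by simp
  show ?thesis
  proof (cases "(a=0 \<and> s=0) \<or> s<a \<or> (a<s \<and> ss=s)")
    case isol: True
    have P1: "PP x (posR k y a) = (negc r, Weak (int (posB k g)))"
      unfolding P regnode_def by (rule if_P[OF isol])
    show ?thesis
    proof (cases "x (FB g) = y")
      case True
      have ca: "clause_at F (PP x) (int (posB k g)) = negc r"
        using True assms gM by (simp add: PP_def Tout_eval dec_block blocknode_def r_def)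
      have lt: "int (posB k g) < int (posR k y a)" using posB_lt_R[OF gM] by simp
      have "node_valid F (PP x) sF (posR k y a)"
        unfolding node_valid_def P1 using ca lt ne by (auto intro: exI[of _ "{}"])
      then show ?thesis by simp
    next
      case False
      have "iter_sol L (\<lambda>z. x (SB y z)) a"
        using isol assms unfolding iter_sol_def s_def ss_def by auto
      then have "rw_sol L M x (y,a)" using False assms by (simp add: rw_sol_def g_def)
      then show ?thesis by simp
    qed
  next
    case nsol: False
    show ?thesis
    proof (cases "a=0 \<or> s\<noteq>a")
      case True
      have P1: "PP x (posR k y a) = (negc r, Weak (int (posR k y s)))"
        unfolding P regnode_def if_not_P[OF nsol] by (rule if_P[OF True])
      have as: "a < s" using nsol True by auto
      have "ss \<noteq> s" using nsol as by auto
      then have ca: "clause_at F (PP x) (int (posR k y s)) = negc r"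
        using reg_clause[OF assms(1,2) sL] as by (simp add: r_def ss_def)
      have lt: "int (posR k y s) < int (posR k y a)" using posR_mono[OF as sL] by simp
      have "node_valid F (PP x) sF (posR k y a)"
        unfolding node_valid_def P1 using ca lt ne by (auto intro: exI[of _ "{}"])
      then show ?thesis by simp
    next
      case False
      have P1: "PP x (posR k y a) = axn"
        unfolding P regnode_def if_not_P[OF nsol] by (rule if_not_P[OF False])
      have "node_valid F (PP x) sF (posR k y a)"
        unfolding node_valid_def P1 axn_def using ne m_pos clause_m1 by (auto intro: exI[of _ "{}"])
      then show ?thesis by simp
    qed
  qed
qed


lemma valid_pad: assumes "dec j = KPad" shows "node_valid F (PP x) sF j"
proof -
  have P: "PP x j = axn" using assms by (simp add: PP_def Tout_eval)
  have j: "j \<noteq> sF - 1" using dec_inv_pad[OF assms] by simp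
  have m: "- int (length F) \<le> -1" using m_pos by simp
  show ?thesis unfolding node_valid_def P axn_def
    using j m clause_m1[of "PP x"] by (auto intro: exI[of _ "{}"])
qed

lemma valid_fin: assumes "dec j = KFin" shows "node_valid F (PP x) sF j"
proof -
  have P: "PP x j = ({}, Weak (int (posR 0 0 0)))" using assms by (simp add: PP_def Tout_eval finnode_def)
  have lt: "posR 0 0 0 < j" using dec_inv_fin[OF assms] posR_bound[of 0 0 0] hn hM hL by simp
  have c: "clause_at F (PP x) (int (posR 0 0 0)) = {}"
    using reg_clause[of 0 0 0] hn hM hL by simp
  show ?thesis unfolding node_valid_def P using lt c by auto
qed

lemma sol_ok: assumes "i < sF" "\<not> node_valid F (PP x) sF i"
  shows "rw_sol L M x (dt_eval (Tsol i) x)"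
proof (cases "dec i")
  case (KLeaf z) then show ?thesis using dec_inv_leaf[OF KLeaf] valid_leaf assms(2) by blast
next
  case (KBlock k b) then show ?thesis using dec_inv_block[OF KBlock] valid_block assms(2) by blast
next
  case (KReg k y a)
  have "i = posR k y a" "k<n" "y<2*M" "a<L" using dec_inv_reg[OF KReg hL] by auto
  then have "rw_sol L M x (y,a)" using valid_reg assms(2) by blast
  then show ?thesis using KReg by (simp add: Tsol_def)
next
  case KPad then show ?thesis using valid_pad assms(2) by blast
next
  case KFin then show ?thesis using valid_fin assms(2) by blast
qed

lemma lastF_ok: "l \<in> last F \<Longrightarrow> fst l < n"
proof -
  assume l: "l \<in> last F"
  have "last F \<in> set F" using F_ne[OF hu] by simp
  then show ?thesis using hF l unfolding cnf_over_def by blast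
qed

lemma dom_ok: "PP x \<in> ref_dom n sF"
  unfolding ref_dom_def mem_Collect_eq
proof (intro allI impI ballI)
  fix j l assume j: "j < sF" and l: "l \<in> fst (PP x j)"
  show "fst l < n"
  proof (cases "dec j")
    case (KLeaf z)
    then have "l \<in> negc (rho x n z)" using l by (simp add: PP_def Tout_eval leafnode_def)
    then show ?thesis using negc_vars by fastforce
  next
    case (KBlock k b)
    then have "l \<in> negc (rho x k (x (FB b)))" using l by (simp add: PP_def Tout_eval blocknode_def)
    moreover have "k < n" using dec_inv_block[OF KBlock] by simp
    ultimately show ?thesis using negc_vars by fastforce
  next
    case (KReg k y a)
    have kn: "k < n" using dec_inv_reg[OF KReg hL] by simp
    have "l \<in> negc (rho x k y) \<or> l \<in> last F" using l KReg
      by (simp add: PP_def Tout_eval regnode_def axn_def split: if_splits)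
    then show ?thesis
    proof
      assume "l \<in> negc (rho x k y)" then show ?thesis using negc_vars[of l "rho x k y"] kn by simp
    next
      assume "l \<in> last F" then show ?thesis by (rule lastF_ok)
    qed
  next
    case KPad then show ?thesis using l lastF_ok by (simp add: PP_def Tout_eval axn_def)
  next
    case KFin then show ?thesis using l by (simp add: PP_def Tout_eval finnode_def)
  qed
qed

lemma card_ins: "finite A \<Longrightarrow> card (insert a A) \<le> Suc (card A)"
  by (simp add: card_insert_if)

lemma depth_ok: "card (dt_blocks (Tout j) x) \<le> n + 3"
proof (cases "dec j")
  case (KLeaf z)
  then show ?thesis using rhoT_card[of n z x] by (simp add: Tout_def)
next
  case (KBlock k b)
  have kn: "k < n" using dec_inv_block[OF KBlock] by simp
  have "dt_blocks (Tout j) x = insert (FB b) (dt_blocks (rhoT k (x (FB b))) x)"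
    using KBlock by (simp add: Tout_def)
  then have "card (dt_blocks (Tout j) x) \<le> Suc (card (dt_blocks (rhoT k (x (FB b))) x))"
    using card_ins[OF finite_blocks] by simp
  then show ?thesis using rhoT_card[of k "x (FB b)" x] kn by linarith
next
  case (KReg k y a)
  have kn: "k < n" using dec_inv_reg[OF KReg hL] by simp
  define B where "B = dt_blocks (rhoT k y) x"
  have "dt_blocks (Tout j) x = insert (SB y a) (insert (SB y (x (SB y a))) (insert (GB y a) B))"
    using KReg by (simp add: Tout_def B_def; blast)
  moreover have "card (insert (SB y a) (insert (SB y (x (SB y a))) (insert (GB y a) B))) \<le> Suc (Suc (Suc (card B)))"
  proof -
    have f: "finite B" by (simp add: B_def)
    have 1: "card (insert (GB y a) B) \<le> Suc (card B)" using card_ins[OF f] .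
    have 2: "card (insert (SB y (x (SB y a))) (insert (GB y a) B)) \<le> Suc (card (insert (GB y a) B))"
      by (rule card_ins) (simp add: f)
    have 3: "card (insert (SB y a) (insert (SB y (x (SB y a))) (insert (GB y a) B))) \<le> Suc (card (insert (SB y (x (SB y a))) (insert (GB y a) B)))"
      by (rule card_ins) (simp add: f)
    show ?thesis using 1 2 3 by linarith
  qed
  ultimately have "card (dt_blocks (Tout j) x) \<le> Suc (Suc (Suc (card B)))" by simp
  moreover have "card B \<le> k" using rhoT_card[of k y x] by (simp add: B_def)
  ultimately show ?thesis using kn by linarith
next
  case KPad then show ?thesis by (simp add: Tout_def)
next
  case KFin then show ?thesis by (simp add: Tout_def)
qed

lemma pointwise:
  "(\<lambda>j. dt_eval (Tout j) x) \<in> ref_dom n sF \<and>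
   (\<forall>out. ref_sol F sF (\<lambda>j. dt_eval (Tout j) x) out \<longrightarrow> rw_sol L M x (dt_eval (Tsol out) x)) \<and>
   (\<forall>j. card (dt_blocks (Tout j) x) \<le> 4*n) \<and>
   (\<forall>out. card (dt_blocks (Tsol out) x) \<le> 4*n)"
proof (intro conjI allI impI)
  show "(\<lambda>j. dt_eval (Tout j) x) \<in> ref_dom n sF" using dom_ok by (simp add: PP_def)
next
  fix out assume "ref_sol F sF (\<lambda>j. dt_eval (Tout j) x) out"
  then show "rw_sol L M x (dt_eval (Tsol out) x)" using sol_ok unfolding ref_sol_def PP_def by blast
next
  fix j show "card (dt_blocks (Tout j) x) \<le> 4*n" using depth_ok[of j] hn by linarith
next
  fix out show "card (dt_blocks (Tsol out) x) \<le> 4*n" by (simp add: Tsol_def)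
qed

end

lemma reduction:
  assumes hn: "n \<ge> 1" and hL: "L \<ge> 1" and hM: "M \<ge> 1" and hs: "Bsz + 2 \<le> sF"
    and hF: "cnf_over n F" and hu: "unsat F"
  shows "dt_reduction (rw_dom L M) (rw_sol L M) (ref_dom n sF) (ref_sol F sF) Tout Tsol (4*n)"
  unfolding dt_reduction_def using pointwise[OF hn hL hM hs hF hu] by blast

end

lemma size_bound:
  fixes n L M m :: nat
  assumes "n \<ge> 1" "L \<ge> 1" "M \<ge> 1" "m \<ge> 1"
  shows "2*M + n*(M + 2*M*L) + 2 \<le> 6*(n*L*M + m)"
proof -
  have "1 \<le> n*L" using assms by simp
  then have a: "M \<le> n*L*M" by (metis mult_le_mono1 mult_1)
  have "n*M*1 \<le> n*M*L" using assms(2) by (intro mult_le_mono2)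
  then have b: "n*M \<le> n*L*M" by (simp add: ac_simps)
  have c: "n*(2*M*L) = 2*(n*L*M)" by (simp add: ac_simps)
  have d: "n*(M + 2*M*L) = n*M + 2*(n*L*M)" using c by (simp add: add_mult_distrib2)
  define P where "P = n*L*M"
  define Q where "Q = n*M"
  have a': "M \<le> P" and b': "Q \<le> P" using a b by (simp_all add: P_def Q_def)
  have "2*M + n*(M + 2*M*L) + 2 = 2*M + Q + 2*P + 2" unfolding d P_def Q_def by simp
  moreover have "2*M + Q + 2*P + 2 \<le> 6*P + 6*m" using a' b' assms(4) by linarith
  moreover have "6*(P + m) = 6*P + 6*m" by simp
  ultimately show ?thesis unfolding P_def by linarith
qed

theorem theorem4p4:
  shows "\<exists>C::nat. C \<ge> 2 \<and> (\<exists>K::nat. \<forall>L M n :: nat. \<forall>F :: cnf. \<forall>sF :: nat.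
     L \<ge> 1 \<longrightarrow> M \<ge> 1 \<longrightarrow> n \<ge> 1 \<longrightarrow>
     cnf_over n F \<longrightarrow> unsat F \<longrightarrow>
     sF \<ge> C * (n * L * M + length F) \<longrightarrow>
     (\<forall>P Lp. is_refutation F P Lp \<longrightarrow> Lp > sF) \<longrightarrow>
     (\<exists>(Tout :: nat \<Rightarrow> (rw_block, nat, node) dtree) (Tsol :: nat \<Rightarrow> (rw_block, nat, nat \<times> nat) dtree).
        dt_reduction (rw_dom L M) (rw_sol L M) (ref_dom n sF) (ref_sol F sF) Tout Tsol (K * n)))"
proof (rule exI[of _ 6], rule conjI, simp, rule exI[of _ 4], intro allI impI)
  fix L M n :: nat and F :: cnf and sF :: nat
  assume hL: "L \<ge> 1" and hM: "M \<ge> 1" and hn: "n \<ge> 1" and hF: "cnf_over n F" and hu: "unsat F"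
    and hs: "6 * (n * L * M + length F) \<le> sF"
  have m: "length F \<ge> 1" using Cn.F_ne[OF hu] by (cases F) auto
  have "Cn.Bsz n L M + 2 \<le> sF"
    using size_bound[OF hn hL hM m] hs unfolding Cn.Bsz_def Cn.W_def by linarith
  then show "\<exists>(Tout :: nat \<Rightarrow> (rw_block, nat, node) dtree) (Tsol :: nat \<Rightarrow> (rw_block, nat, nat \<times> nat) dtree).
        dt_reduction (rw_dom L M) (rw_sol L M) (ref_dom n sF) (ref_sol F sF) Tout Tsol (4 * n)"
    using Cn.reduction[OF hn hL hM _ hF hu] by blast
qed

end
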